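(* Let $H:\underline{\mathcal Z}\to\mathcal Y$ be a linear functional that has the minimal FMP and is minimally continuous, and suppose the subspaces $\operatorname{span}(H\circ\delta^t(\mathcal B))$, $t\le0$, of $\mathcal Y$ are pairwise orthogonal. Let $(\mathbb H,\langle\cdot,\cdot\rangle_{\mathbb H})$ be the reproducing kernel Hilbert space associated to the kernel $K_H(\underline z^1,\underline z^2)=\langle H(\underline z^1),H(\underline z^2)\rangle_{\mathcal Y}$ on $\underline{\mathcal Z}$, with norm $\|\cdot\|_{\mathbb H}$. Let $T\in\mathbb Z_-$ and let $\mathbb H_T\subseteq\mathbb H$ be the subspace of all $f\in\mathbb H$ such that $f(\underline z)$ depends only on $z_T,\dots,z_0$. Let $M\in\mathbb N$, $\underline z^1,\dots,\underline z^M\in\underline{\mathcal Z}$, let $\Lambda:[0,\infty)\to[0,\infty)$ be strictly increasing and $\mathcal E:\mathbb R^M\to\mathbb R$ any function, and for $\underline z\in\underline{\mathcal Z}$ write $\tau_T(\underline z)=\sum_{t=T}^0\delta^t(z_t)$. Then $$\operatorname*{argmin}_{f\in\mathbb H}\ \mathcal E\big(f(\tau_T(\underline z^1)),\dots,f(\tau_T(\underline z^M))\big)+\Lambda(\|f\|_{\mathbb H})=\operatorname*{argmin}_{f\in\mathbb H_T}\ \mathcal E\big(f(\underline z^1),\dots,f(\underline z^M)\big)+\Lambda(\|f\|_{\mathbb H}).$$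
   Context: $(\mathcal Z,\langle\cdot,\cdot\rangle_{\mathcal Z})$ and $(\mathcal Y,\langle\cdot,\cdot\rangle_{\mathcal Y})$ are real Hilbert spaces; $\mathcal B$ is the closed unit ball of $\mathcal Z$. Let $\mathbb Z_-=\{0,-1,-2,\dots\}$; elements of $\mathcal Z^{\mathbb Z_-}$ are sequences $\underline z=(z_t)_{t\le0}$. For $t\in\mathbb Z_-$, $\delta^t:\mathcal Z\to\mathcal Z^{\mathbb Z_-}$ maps $z$ to the sequence with entry $z$ at time $t$ and $0$ elsewhere. Standing assumption: $\underline{\mathcal Z}\subseteq\mathcal Z^{\mathbb Z_-}$ is a set such that (a) $\underline{\mathcal Z}$ is convex and $\underline{\mathcal Z}=-\underline{\mathcal Z}$; (b) $\delta^t(\mathcal B)\subseteq\underline{\mathcal Z}$ for all $t\in\mathbb Z_-$; (c) for every $\underline z\in\underline{\mathcal Z}$ and $J\subseteq\mathbb Z_-$, the sequence $\sum_{t\in J}\delta^t(z_t)$ (equal to $z_t$ for $t\in J$ and $0$ elsewhere) belongs to $\underline{\mathcal Z}$. A functional $H:\underline{\mathcal Z}\to\mathcal Y$ is linear if it is the restriction of a linear map on $\operatorname{span}(\underline{\mathcal Z})$. $H$ is minimally continuous if $H\circ\delta^t:\mathcal B\to\mathcal Y$ is continuous for every $t$; $H$ has the minimal FMP if $H(\sum_{t=T}^0\delta^t(z_t))\to H(\underline z)$ as $T\to-\infty$ for every $\underline z\in\underline{\mathcal Z}$. The argmin sets are sets of minimizers (possibly empty). *)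

theory Defs
  imports "HOL-Analysis.Analysis"
begin

text \<open>Sequences indexed by the non-positive integers are represented as functions
  nat => 'z, where the value at n is the entry at time t = -n.\<close>

definition delta :: "nat \<Rightarrow> 'z::real_vector \<Rightarrow> (nat \<Rightarrow> 'z)" where
  "delta t z = (\<lambda>s. if s = t then z else 0)"

text \<open>Truncation: tau N z keeps the entries at times -N,...,0 (i.e. T = -N).\<close>
definition tau :: "nat \<Rightarrow> (nat \<Rightarrow> 'z::real_vector) \<Rightarrow> (nat \<Rightarrow> 'z)" where
  "tau N z = (\<lambda>s. if s \<le> N then z s else 0)"

definition unit_ball :: "'z::real_normed_vector set" where
  "unit_ball = cball 0 1"

definition admissible_inputs :: "(nat \<Rightarrow> 'z::real_normed_vector) set \<Rightarrow> bool" where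
  "admissible_inputs Zs \<longleftrightarrow>
     (\<forall>x\<in>Zs. \<forall>y\<in>Zs. \<forall>a::real. 0 \<le> a \<and> a \<le> 1 \<longrightarrow> (\<lambda>n. a *\<^sub>R x n + (1 - a) *\<^sub>R y n) \<in> Zs)
   \<and> (\<forall>x\<in>Zs. (\<lambda>n. - x n) \<in> Zs) \<and> (\<forall>x. (\<lambda>n. - x n) \<in> Zs \<longrightarrow> x \<in> Zs)
   \<and> (\<forall>t. delta t ` unit_ball \<subseteq> Zs)
   \<and> (\<forall>x\<in>Zs. \<forall>J::nat set. (\<lambda>s. if s \<in> J then x s else 0) \<in> Zs)"

inductive_set seq_span :: "(nat \<Rightarrow> 'z::real_vector) set \<Rightarrow> (nat \<Rightarrow> 'z) set"
  for X where
    base: "x \<in> X \<Longrightarrow> x \<in> seq_span X"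
  | zero: "(\<lambda>n. 0) \<in> seq_span X"
  | add: "x \<in> seq_span X \<Longrightarrow> y \<in> seq_span X \<Longrightarrow> (\<lambda>n. x n + y n) \<in> seq_span X"
  | scale: "x \<in> seq_span X \<Longrightarrow> (\<lambda>n. c *\<^sub>R x n) \<in> seq_span X"

definition linear_functional ::
  "(nat \<Rightarrow> 'z::real_vector) set \<Rightarrow> ((nat \<Rightarrow> 'z) \<Rightarrow> 'y::real_vector) \<Rightarrow> bool" where
  "linear_functional Zs H \<longleftrightarrow>
     (\<exists>L. (\<forall>x\<in>seq_span Zs. \<forall>y\<in>seq_span Zs. L (\<lambda>n. x n + y n) = L x + L y)
        \<and> (\<forall>x\<in>seq_span Zs. \<forall>c. L (\<lambda>n. c *\<^sub>R x n) = c *\<^sub>R L x)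
        \<and> (\<forall>z\<in>Zs. H z = L z))"

definition minimally_continuous ::
  "((nat \<Rightarrow> 'z::real_normed_vector) \<Rightarrow> 'y::topological_space) \<Rightarrow> bool" where
  "minimally_continuous H \<longleftrightarrow> (\<forall>t. continuous_on unit_ball (H \<circ> delta t))"

definition minimal_FMP ::
  "(nat \<Rightarrow> 'z::real_vector) set \<Rightarrow> ((nat \<Rightarrow> 'z) \<Rightarrow> 'y::topological_space) \<Rightarrow> bool" where
  "minimal_FMP Zs H \<longleftrightarrow> (\<forall>z\<in>Zs. (\<lambda>N. H (tau N z)) \<longlonglongrightarrow> H z)"

text \<open>Reproducing kernel Hilbert space (Hs, ip) of real functions on X with kernel K.
  Functions are extended by 0 outside X.\<close>
definition is_RKHS ::
  "'a set \<Rightarrow> ('a \<Rightarrow> 'a \<Rightarrow> real) \<Rightarrow> ('a \<Rightarrow> real) set \<Rightarrow> (('a \<Rightarrow> real) \<Rightarrow> ('a \<Rightarrow> real) \<Rightarrow> real) \<Rightarrow> bool" where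
  "is_RKHS X K Hs ip \<longleftrightarrow>
     (\<forall>f\<in>Hs. \<forall>x. x \<notin> X \<longrightarrow> f x = 0)
   \<and> (\<lambda>x. 0) \<in> Hs
   \<and> (\<forall>f\<in>Hs. \<forall>g\<in>Hs. (\<lambda>x. f x + g x) \<in> Hs)
   \<and> (\<forall>f\<in>Hs. \<forall>c. (\<lambda>x. c * f x) \<in> Hs)
   \<and> (\<forall>f\<in>Hs. \<forall>g\<in>Hs. ip f g = ip g f)
   \<and> (\<forall>f\<in>Hs. \<forall>g\<in>Hs. \<forall>h\<in>Hs. ip (\<lambda>x. f x + g x) h = ip f h + ip g h)
   \<and> (\<forall>f\<in>Hs. \<forall>g\<in>Hs. \<forall>c. ip (\<lambda>x. c * f x) g = c * ip f g)
   \<and> (\<forall>f\<in>Hs. 0 \<le> ip f f)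
   \<and> (\<forall>f\<in>Hs. ip f f = 0 \<longrightarrow> f = (\<lambda>x. 0))
   \<and> (\<forall>F. (\<forall>n. F n \<in> Hs) \<and>
          (\<forall>e>0. \<exists>N. \<forall>m\<ge>N. \<forall>n\<ge>N. sqrt (ip (\<lambda>x. F m x - F n x) (\<lambda>x. F m x - F n x)) < e)
        \<longrightarrow> (\<exists>f\<in>Hs. (\<lambda>n. sqrt (ip (\<lambda>x. F n x - f x) (\<lambda>x. F n x - f x))) \<longlonglongrightarrow> 0))
   \<and> (\<forall>y\<in>X. (\<lambda>x. if x \<in> X then K x y else 0) \<in> Hs)
   \<and> (\<forall>y\<in>X. \<forall>f\<in>Hs. ip f (\<lambda>x. if x \<in> X then K x y else 0) = f y)"

definition argmin_on :: "'a set \<Rightarrow> ('a \<Rightarrow> real) \<Rightarrow> 'a set" where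
  "argmin_on S F = {f \<in> S. \<forall>g\<in>S. F f \<le> F g}"

end

theory Submission
  imports Defs
begin


locale ips =
  fixes Hs :: "('a \<Rightarrow> real) set" and ip :: "('a \<Rightarrow> real) \<Rightarrow> ('a \<Rightarrow> real) \<Rightarrow> real"
  assumes zero: "(\<lambda>x. 0) \<in> Hs"
    and add: "\<And>f g. f\<in>Hs \<Longrightarrow> g\<in>Hs \<Longrightarrow> (\<lambda>x. f x + g x) \<in> Hs"
    and scl: "\<And>f c. f\<in>Hs \<Longrightarrow> (\<lambda>x. c * f x) \<in> Hs"
    and sym: "\<And>f g. f\<in>Hs \<Longrightarrow> g\<in>Hs \<Longrightarrow> ip f g = ip g f"
    and ipadd: "\<And>f g h. f\<in>Hs \<Longrightarrow> g\<in>Hs \<Longrightarrow> h\<in>Hs \<Longrightarrow> ip (\<lambda>x. f x + g x) h = ip f h + ip g h"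
    and ipscl: "\<And>f g c. f\<in>Hs \<Longrightarrow> g\<in>Hs \<Longrightarrow> ip (\<lambda>x. c * f x) g = c * ip f g"
    and pos: "\<And>f. f\<in>Hs \<Longrightarrow> 0 \<le> ip f f"
    and def: "\<And>f. f\<in>Hs \<Longrightarrow> ip f f = 0 \<Longrightarrow> f = (\<lambda>x. 0)"
    and complete: "\<And>F. (\<forall>n. F n \<in> Hs) \<and>
          (\<forall>e>0. \<exists>N. \<forall>m\<ge>N. \<forall>n\<ge>N. sqrt (ip (\<lambda>x. F m x - F n x) (\<lambda>x. F m x - F n x)) < e)
        \<Longrightarrow> (\<exists>f\<in>Hs. (\<lambda>n. sqrt (ip (\<lambda>x. F n x - f x) (\<lambda>x. F n x - f x))) \<longlonglongrightarrow> 0)"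
begin

lemma lc_mem: "f\<in>Hs \<Longrightarrow> g\<in>Hs \<Longrightarrow> (\<lambda>x. a * f x + b * g x) \<in> Hs"
  using add[OF scl[of f a] scl[of g b]] by simp

lemma diff_mem: "f\<in>Hs \<Longrightarrow> g\<in>Hs \<Longrightarrow> (\<lambda>x. f x - g x) \<in> Hs"
  using lc_mem[of f g 1 "-1"] by simp

lemma ip_lc: "f\<in>Hs \<Longrightarrow> g\<in>Hs \<Longrightarrow> h\<in>Hs \<Longrightarrow>
   ip (\<lambda>x. a * f x + b * g x) h = a * ip f h + b * ip g h"
  using ipadd[OF scl[of f a] scl[of g b]] ipscl by simp

lemma ip_lc_r: "f\<in>Hs \<Longrightarrow> g\<in>Hs \<Longrightarrow> h\<in>Hs \<Longrightarrow>
   ip h (\<lambda>x. a * f x + b * g x) = a * ip h f + b * ip h g"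
  using ip_lc[of f g h a b] sym lc_mem by metis

lemma Q_lc: "f\<in>Hs \<Longrightarrow> g\<in>Hs \<Longrightarrow>
   ip (\<lambda>x. a * f x + b * g x) (\<lambda>x. a * f x + b * g x) = a^2 * ip f f + 2*a*b * ip f g + b^2 * ip g g"
  using ip_lc[of f g "(\<lambda>x. a * f x + b * g x)" a b] ip_lc_r[of f g f a b] ip_lc_r[of f g g a b]
    lc_mem[of f g a b] sym[of f g]
  by (simp add: algebra_simps power2_eq_square)

lemma ip_zero: "f\<in>Hs \<Longrightarrow> ip (\<lambda>x. 0) f = 0"
  using ipscl[OF zero, of f 0] by simp

lemma ip_zero_r: "f\<in>Hs \<Longrightarrow> ip f (\<lambda>x. 0) = 0"
  using ip_zero sym zero by metis

lemma CS: assumes f: "f\<in>Hs" and g: "g\<in>Hs" shows "(ip f g)^2 \<le> ip f f * ip g g"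
proof (cases "ip g g = 0")
  case True
  then have "g = (\<lambda>x. 0)" using def g by blast
  then show ?thesis using ip_zero_r f pos f g by simp
next
  case False
  then have gp: "ip g g > 0" using pos g by (simp add: order_less_le)
  have "0 \<le> ip (\<lambda>x. ip g g * f x + (- ip f g) * g x) (\<lambda>x. ip g g * f x + (- ip f g) * g x)"
    using pos lc_mem f g by blast
  also have "\<dots> = (ip g g)^2 * ip f f + 2 * (ip g g) * (- ip f g) * ip f g + (- ip f g)^2 * ip g g"
    by (rule Q_lc[OF f g])
  also have "\<dots> = ip g g * (ip g g * ip f f - (ip f g)^2)"
    by (simp add: algebra_simps power2_eq_square)
  finally have "0 \<le> ip g g * ip f f - (ip f g)^2" using gp
    by (simp add: zero_le_mult_iff)
  then show ?thesis by (simp add: mult.commute)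
qed

lemma CS_abs: assumes f: "f\<in>Hs" and g: "g\<in>Hs" shows "\<bar>ip f g\<bar> \<le> sqrt (ip f f) * sqrt (ip g g)"
proof -
  have "\<bar>ip f g\<bar> = sqrt ((ip f g)^2)" by simp
  also have "\<dots> \<le> sqrt (ip f f * ip g g)" using CS[OF f g] real_sqrt_le_mono by blast
  finally show ?thesis by (simp add: real_sqrt_mult)
qed

lemma projection:
  assumes VH: "V \<subseteq> Hs" and V0: "(\<lambda>x. 0) \<in> V"
    and Vlc: "\<And>u v a b. u\<in>V \<Longrightarrow> v\<in>V \<Longrightarrow> (\<lambda>x. a * u x + b * v x) \<in> V"
    and Vcl: "\<And>F g. (\<forall>n. F n \<in> V) \<Longrightarrow> g \<in> Hs \<Longrightarrow>
         (\<lambda>n. sqrt (ip (\<lambda>x. F n x - g x) (\<lambda>x. F n x - g x))) \<longlonglongrightarrow> 0 \<Longrightarrow> g \<in> V"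
    and f: "f \<in> Hs"
  shows "\<exists>g\<in>V. \<forall>v\<in>V. ip (\<lambda>x. f x - g x) v = 0"
proof -
  define Q where "Q h = ip h h" for h
  define D where "D = (\<lambda>v. Q (\<lambda>x. f x - v x)) ` V"
  define d where "d = Inf D"
  have Dne: "D \<noteq> {}" using V0 D_def by blast
  have Dpos: "0 \<le> y" if "y \<in> D" for y
  proof -
    obtain v where v: "v \<in> V" "y = Q (\<lambda>x. f x - v x)" using \<open>y \<in> D\<close> by (auto simp: D_def)
    then have "v \<in> Hs" using VH by blast
    then show ?thesis using v pos[OF diff_mem[OF f]] unfolding Q_def by simp
  qed
  have Dbdd: "bdd_below D" using Dpos by (rule bdd_belowI)
  have d_le: "d \<le> Q (\<lambda>x. f x - v x)" if "v \<in> V" for v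
    unfolding d_def using Dbdd that D_def by (auto intro!: cInf_lower)
  have d0: "0 \<le> d" unfolding d_def
    using Dpos by (rule cInf_greatest[OF Dne])
  have "\<forall>n. \<exists>v. v \<in> V \<and> Q (\<lambda>x. f x - v x) < d + 1 / real (Suc n)"
  proof
    fix n
    have "Inf D < d + 1 / real (Suc n)" unfolding d_def by simp
    then obtain y where "y \<in> D" "y < d + 1 / real (Suc n)" using cInf_lessD[OF Dne] by blast
    then show "\<exists>v. v \<in> V \<and> Q (\<lambda>x. f x - v x) < d + 1 / real (Suc n)" unfolding D_def by blast
  qed
  then obtain F where FV: "\<And>n. F n \<in> V" and Fd: "\<And>n. Q (\<lambda>x. f x - F n x) < d + 1 / real (Suc n)"
    by metis
  have FH: "F n \<in> Hs" for n using FV VH by blast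
  have par: "Q (\<lambda>x. F m x - F n x) \<le> 2 / real (Suc m) + 2 / real (Suc n)" for m n
  proof -
    define a where "a = (\<lambda>x. f x - F m x)"
    define b where "b = (\<lambda>x. f x - F n x)"
    have aH: "a \<in> Hs" and bH: "b \<in> Hs" unfolding a_def b_def using diff_mem f FH by auto
    have e1: "(\<lambda>x. F m x - F n x) = (\<lambda>x. (-1) * a x + 1 * b x)" unfolding a_def b_def by auto
    have e2: "(\<lambda>x. f x - (1/2 * F m x + 1/2 * F n x)) = (\<lambda>x. (1/2) * a x + (1/2) * b x)"
      unfolding a_def b_def by (auto simp: algebra_simps)
    have "d \<le> Q (\<lambda>x. f x - (1/2 * F m x + 1/2 * F n x))"
      using d_le[OF Vlc[OF FV FV, of "1/2" m "1/2" n]] by simp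
    then have "d \<le> (1/4) * Q a + (1/2) * ip a b + (1/4) * Q b"
      unfolding e2 Q_def using Q_lc[OF aH bH, of "1/2" "1/2"] by (simp add: power2_eq_square)
    moreover have "Q (\<lambda>x. F m x - F n x) = Q a - 2 * ip a b + Q b"
      unfolding e1 Q_def using Q_lc[OF aH bH, of "-1" 1] by simp
    moreover have "Q a < d + 1 / real (Suc m)" "Q b < d + 1 / real (Suc n)"
      using Fd a_def b_def by auto
    ultimately show ?thesis by linarith
  qed
  have cauchy: "\<forall>e>0. \<exists>M. \<forall>m\<ge>M. \<forall>n\<ge>M. sqrt (ip (\<lambda>x. F m x - F n x) (\<lambda>x. F m x - F n x)) < e"
  proof (intro allI impI)
    fix e :: real assume e: "e > 0"
    obtain M where M: "4 / e^2 < real M" using reals_Archimedean2 by blast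
    have "4 / real (Suc M) < e^2"
    proof -
      have "4 < real M * e^2" using M e by (simp add: field_simps)
      also have "\<dots> < real (Suc M) * e^2" using e by simp
      finally show ?thesis by (simp add: field_simps)
    qed
    show "\<exists>M. \<forall>m\<ge>M. \<forall>n\<ge>M. sqrt (ip (\<lambda>x. F m x - F n x) (\<lambda>x. F m x - F n x)) < e"
    proof (intro exI allI impI)
      fix m n assume mn: "M \<le> m" "M \<le> n"
      have "2 / real (Suc m) \<le> 2 / real (Suc M)" "2 / real (Suc n) \<le> 2 / real (Suc M)"
        using mn by (auto simp: divide_simps)
      then have "Q (\<lambda>x. F m x - F n x) < e^2" using par[of m n] \<open>4 / real (Suc M) < e^2\<close> by simp
      then have "sqrt (Q (\<lambda>x. F m x - F n x)) < sqrt (e^2)" by (simp only: real_sqrt_less_iff)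
      then show "sqrt (ip (\<lambda>x. F m x - F n x) (\<lambda>x. F m x - F n x)) < e" using e by (simp add: Q_def)
    qed
  qed
  obtain g where gH: "g \<in> Hs" and glim: "(\<lambda>n. sqrt (ip (\<lambda>x. F n x - g x) (\<lambda>x. F n x - g x))) \<longlonglongrightarrow> 0"
    using complete[of F] FH cauchy by blast
  have gV: "g \<in> V" using Vcl[OF _ gH glim] FV by blast
  define h where "h = (\<lambda>x. f x - g x)"
  have hH: "h \<in> Hs" unfolding h_def using diff_mem f gH by blast
  have hd: "Q h \<le> d"
  proof (rule LIMSEQ_le_const)
    define s where "s n = sqrt (ip (\<lambda>x. F n x - g x) (\<lambda>x. F n x - g x))" for n
    have "(\<lambda>n. d + 1 / real (Suc n) + 2 * sqrt (d + 1) * s n + (s n)^2) \<longlonglongrightarrow> d + 0 + 2 * sqrt (d+1) * 0 + 0^2"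
      using glim unfolding s_def[abs_def]
      by (intro tendsto_intros LIMSEQ_inverse_real_of_nat[unfolded inverse_eq_divide])
    then show "(\<lambda>n. d + 1 / real (Suc n) + 2 * sqrt (d + 1) * s n + (s n)^2) \<longlonglongrightarrow> d" by simp
    show "\<exists>N. \<forall>n\<ge>N. Q h \<le> d + 1 / real (Suc n) + 2 * sqrt (d + 1) * s n + (s n)^2"
    proof (intro exI allI impI)
      fix n :: nat
      define a where "a = (\<lambda>x. f x - F n x)"
      define c where "c = (\<lambda>x. F n x - g x)"
      have aH: "a \<in> Hs" and cH: "c \<in> Hs" unfolding a_def c_def using diff_mem f FH gH by auto
      have s0: "0 \<le> s n" unfolding s_def using pos[OF cH] c_def by simp
      have "h = (\<lambda>x. 1 * a x + 1 * c x)" unfolding h_def a_def c_def by auto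
      then have e: "Q h = Q a + 2 * ip a c + Q c" unfolding Q_def using Q_lc[OF aH cH, of 1 1] by simp
      have e2: "ip a c \<le> sqrt (Q a) * sqrt (Q c)" using CS_abs[OF aH cH] unfolding Q_def by linarith
      have e3: "Q c = (s n)^2" unfolding s_def c_def Q_def using pos[OF cH] c_def by simp
      then have e4: "sqrt (Q c) = s n" using s0 by simp
      have qa: "Q a < d + 1 / real (Suc n)" using Fd a_def by simp
      have "sqrt (Q a) \<le> sqrt (d + 1)"
      proof -
        have "d + 1 / real (Suc n) \<le> d + 1" by (simp add: divide_simps algebra_simps)
        then have "Q a \<le> d + 1" using qa by linarith then show ?thesis by simp
      qed
      then have e5: "sqrt (Q a) * s n \<le> sqrt (d+1) * s n" using s0 by (simp add: mult_right_mono)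
      show "Q h \<le> d + 1 / real (Suc n) + 2 * sqrt (d + 1) * s n + (s n)^2"
        using e e2 e3 e4 e5 qa by simp
    qed
  qed
  have "ip h v = 0" if vV: "v \<in> V" for v
  proof (rule ccontr)
    assume p0: "ip h v \<noteq> 0"
    have vH: "v \<in> Hs" using vV VH by blast
    define p where "p = ip h v"
    define c where "c = Q v + 1"
    have c0: "c > 0" unfolding c_def Q_def using pos[OF vH] by simp
    define t where "t = p / c"
    have "Q h \<le> Q (\<lambda>x. f x - (1 * g x + t * v x))" using hd d_le[OF Vlc[OF gV vV, of 1 t]] by linarith
    also have "(\<lambda>x. f x - (1 * g x + t * v x)) = (\<lambda>x. 1 * h x + (-t) * v x)" unfolding h_def by auto
    also have "Q \<dots> = Q h - 2 * t * p + t^2 * Q v" unfolding Q_def p_def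
      using Q_lc[OF hH vH, of 1 "-t"] by simp
    finally have "2 * t * p \<le> t^2 * Q v" by simp
    then have "2 * p * p / c \<le> p * p * Q v / (c * c)" unfolding t_def by (simp add: power2_eq_square)
    then have "2 * p * p * c \<le> p * p * Q v" using c0 by (simp add: field_simps)
    moreover have "p * p > 0" using p0 p_def by (auto simp add: zero_less_mult_iff linorder_neq_iff)
    moreover have "Q v < c" unfolding c_def by simp
    ultimately have A: "2 * (p * p * c) \<le> p * p * Q v" and B: "p * p * Q v < p * p * c" and C: "p * p > 0"
      using mult_strict_left_mono[of "Q v" c "p * p"] by (simp_all add: mult.assoc)
    have "p * p * c > 0" using C c0 by simp
    then show False using A B by linarith
  qed
  then show ?thesis using gV h_def by blast
qed

end

lemma adm_restrict: "admissible_inputs Zs \<Longrightarrow> x \<in> Zs \<Longrightarrow> (\<lambda>s. if s \<in> J then x s else 0) \<in> Zs"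
  unfolding admissible_inputs_def by blast

lemma tau_mem: "admissible_inputs Zs \<Longrightarrow> x \<in> Zs \<Longrightarrow> tau M x \<in> Zs"
proof -
  assume a: "admissible_inputs Zs" "x \<in> Zs"
  have "tau M x = (\<lambda>s. if s \<in> {..M} then x s else 0)" by (simp add: tau_def fun_eq_iff)
  then show ?thesis using adm_restrict[OF a, of "{..M}"] by (simp only:)
qed

lemma delta_mem: "admissible_inputs Zs \<Longrightarrow> x \<in> Zs \<Longrightarrow> delta t (x t) \<in> Zs"
proof -
  assume a: "admissible_inputs Zs" "x \<in> Zs"
  have "delta t (x t) = (\<lambda>s. if s \<in> {t} then x s else 0)" by (simp add: delta_def fun_eq_iff)
  then show ?thesis using adm_restrict[OF a, of "{t}"] by (simp only:)
qed

lemma delta_ball: "admissible_inputs Zs \<Longrightarrow> c \<in> unit_ball \<Longrightarrow> delta t c \<in> Zs"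
  unfolding admissible_inputs_def by blast

lemma H_add: "linear_functional Zs H \<Longrightarrow> x \<in> Zs \<Longrightarrow> y \<in> Zs \<Longrightarrow> (\<lambda>n. x n + y n) \<in> Zs
   \<Longrightarrow> H (\<lambda>n. x n + y n) = H x + H y"
  unfolding linear_functional_def by (metis seq_span.base)

lemma H_scale: "linear_functional Zs H \<Longrightarrow> x \<in> Zs \<Longrightarrow> (\<lambda>n. c *\<^sub>R x n) \<in> Zs
   \<Longrightarrow> H (\<lambda>n. c *\<^sub>R x n) = c *\<^sub>R H x"
  unfolding linear_functional_def by (metis seq_span.base)

lemma tau_Suc: "tau (Suc M) x = (\<lambda>n. tau M x n + delta (Suc M) (x (Suc M)) n)"
  by (auto simp: tau_def delta_def fun_eq_iff)

lemma tau_0: "tau 0 x = delta 0 (x 0)"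
  by (auto simp: tau_def delta_def fun_eq_iff)

lemma H_tau_Suc: "admissible_inputs Zs \<Longrightarrow> linear_functional Zs H \<Longrightarrow> x \<in> Zs \<Longrightarrow>
   H (tau (Suc M) x) = H (tau M x) + H (delta (Suc M) (x (Suc M)))"
  unfolding tau_Suc
  by (rule H_add) (auto intro: tau_mem delta_mem simp: tau_Suc[symmetric])

lemma H_delta_span:
  assumes adm: "admissible_inputs Zs" and lin: "linear_functional Zs H" and d: "delta t d \<in> Zs"
  shows "H (delta t d) \<in> span ((H \<circ> delta t) ` unit_ball)"
proof -
  define r where "r = norm d + 1"
  have r0: "r > 0" unfolding r_def using norm_ge_zero[of d] by linarith
  define e where "e = (1/r) *\<^sub>R d"
  have "norm e = norm d / r" unfolding e_def using r0 by simp
  also have "\<dots> \<le> 1" using r0 by (simp add: r_def divide_simps)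
  finally have "norm e \<le> 1" .
  then have eb: "e \<in> unit_ball" unfolding unit_ball_def by simp
  have de: "delta t e \<in> Zs" using delta_ball[OF adm eb] .
  have eq: "delta t d = (\<lambda>n. r *\<^sub>R delta t e n)" unfolding e_def delta_def using r0 by (auto simp: fun_eq_iff)
  have "H (delta t d) = r *\<^sub>R H (delta t e)"
    using H_scale[OF lin de, of r] d eq by simp
  moreover have "H (delta t e) \<in> span ((H \<circ> delta t) ` unit_ball)"
    using eb by (intro span_base) auto
  ultimately show ?thesis by (simp add: span_scale)
qed

locale hsetup =
  fixes Zs :: "(nat \<Rightarrow> 'z::real_normed_vector) set" and H :: "(nat \<Rightarrow> 'z) \<Rightarrow> 'y::real_inner"
  assumes adm: "admissible_inputs Zs"
    and lin: "linear_functional Zs H"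
    and orth: "\<forall>s t. s \<noteq> t \<longrightarrow>
                 (\<forall>u\<in>span ((H \<circ> delta s) ` unit_ball). \<forall>v\<in>span ((H \<circ> delta t) ` unit_ball). inner u v = 0)"
begin

lemma orth_delta: "s \<noteq> t \<Longrightarrow> delta s a \<in> Zs \<Longrightarrow> delta t b \<in> Zs \<Longrightarrow> inner (H (delta s a)) (H (delta t b)) = 0"
  using orth H_delta_span[OF adm lin] by blast

lemma lemA: "x \<in> Zs \<Longrightarrow> M < t \<Longrightarrow> delta t b \<in> Zs \<Longrightarrow> inner (H (delta t b)) (H (tau M x)) = 0"
proof (induction M)
  case 0
  then show ?case unfolding tau_0 using orth_delta delta_mem[OF adm] by simp
next
  case (Suc M)
  then show ?case unfolding H_tau_Suc[OF adm lin Suc.prems(1)]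
    using orth_delta delta_mem[OF adm] by (simp add: inner_add_right)
qed

lemma lemB: assumes x: "x \<in> Zs" and y: "y \<in> Zs" and NM: "N \<le> M" shows
   "inner (H (tau M y)) (H (tau N x)) = inner (H (tau N y)) (H (tau N x))"
  using NM
proof (induction M rule: dec_induct)
  case base
  then show ?case by simp
next
  case (step M)
  then show ?case unfolding H_tau_Suc[OF adm lin y]
    using lemA[OF x, of N "Suc M"] delta_mem[OF adm y] by (simp add: inner_add_left)
qed

lemma lemC:
  assumes fmp: "minimal_FMP Zs H" and x: "x \<in> Zs" and y: "y \<in> Zs"
  shows "inner (H y) (H (tau N x)) = inner (H (tau N y)) (H (tau N x))"
proof -
  have l0: "(\<lambda>M. H (tau M y)) \<longlonglongrightarrow> H y" using fmp y unfolding minimal_FMP_def by blast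
  have l1: "(\<lambda>M. inner (H (tau M y)) (H (tau N x))) \<longlonglongrightarrow> inner (H y) (H (tau N x))"
    using tendsto_inner[OF l0 tendsto_const[of "H (tau N x)" sequentially]] .
  have "eventually (\<lambda>M. inner (H (tau N y)) (H (tau N x)) = inner (H (tau M y)) (H (tau N x))) sequentially"
    using eventually_ge_at_top[of N] by (rule eventually_mono) (rule lemB[OF x y, symmetric])
  then have l2: "(\<lambda>M. inner (H (tau M y)) (H (tau N x))) \<longlonglongrightarrow> inner (H (tau N y)) (H (tau N x))"
    by (rule Lim_transform_eventually[OF tendsto_const])
  show ?thesis using LIMSEQ_unique[OF l1 l2] .
qed

end


theorem proposition4p4:
  fixes Zs :: "(nat \<Rightarrow> 'z::{real_inner, complete_space}) set"
    and H :: "(nat \<Rightarrow> 'z) \<Rightarrow> 'y::{real_inner, complete_space}"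
    and Hs :: "((nat \<Rightarrow> 'z) \<Rightarrow> real) set"
    and ip :: "((nat \<Rightarrow> 'z) \<Rightarrow> real) \<Rightarrow> ((nat \<Rightarrow> 'z) \<Rightarrow> real) \<Rightarrow> real"
    and N :: nat
    and zs :: "(nat \<Rightarrow> 'z) list"
    and \<Lambda> :: "real \<Rightarrow> real"
    and \<E> :: "real list \<Rightarrow> real"
  assumes adm: "admissible_inputs Zs"
    and zs_in: "set zs \<subseteq> Zs"
    and lin: "linear_functional Zs H"
    and fmp: "minimal_FMP Zs H"
    and cont: "minimally_continuous H"
    and orth: "\<forall>s t. s \<noteq> t \<longrightarrow>
                 (\<forall>u\<in>span ((H \<circ> delta s) ` unit_ball). \<forall>v\<in>span ((H \<circ> delta t) ` unit_ball). inner u v = 0)"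
    and rkhs: "is_RKHS Zs (\<lambda>x y. inner (H x) (H y)) Hs ip"
    and \<Lambda>_nonneg: "\<forall>x\<ge>0. \<Lambda> x \<ge> 0"
    and \<Lambda>_mono: "strict_mono_on {0..} \<Lambda>"
  shows "argmin_on Hs (\<lambda>f. \<E> (map (\<lambda>z. f (tau N z)) zs) + \<Lambda> (sqrt (ip f f)))
       = argmin_on {f \<in> Hs. \<forall>x\<in>Zs. \<forall>y\<in>Zs. (\<forall>s\<le>N. x s = y s) \<longrightarrow> f x = f y}
                   (\<lambda>f. \<E> (map (\<lambda>z. f z) zs) + \<Lambda> (sqrt (ip f f)))"
  
proof -
  have "ips Hs ip" using rkhs unfolding is_RKHS_def ips_def
    apply -
    apply (elim conjE)
    apply (intro conjI)
    apply (assumption | blast)+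
    done
  then interpret ips Hs ip .
  interpret hsetup Zs H using adm lin orth by unfold_locales
  define k where "k y = (\<lambda>x. if x \<in> Zs then inner (H x) (H y) else 0)" for y
  have R1: "\<forall>y\<in>Zs. (\<lambda>x. if x \<in> Zs then inner (H x) (H y) else 0) \<in> Hs"
    using rkhs unfolding is_RKHS_def apply - apply (elim conjE) apply assumption done
  have R2: "\<forall>y\<in>Zs. \<forall>f\<in>Hs. ip f (\<lambda>x. if x \<in> Zs then inner (H x) (H y) else 0) = f y"
    using rkhs unfolding is_RKHS_def apply - apply (elim conjE) apply assumption done
  have kH: "k y \<in> Hs" if "y \<in> Zs" for y
    using R1 that unfolding k_def by blast
  have krep: "ip f (k y) = f y" if "y \<in> Zs" "f \<in> Hs" for y f
    using R2 that unfolding k_def by blast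
  define V where "V = {v\<in>Hs. \<forall>x\<in>Zs. v (tau N x) = v x}"
  have VHT: "V = {f \<in> Hs. \<forall>x\<in>Zs. \<forall>y\<in>Zs. (\<forall>s\<le>N. x s = y s) \<longrightarrow> f x = f y}"
  proof (intro set_eqI iffI)
    fix f assume f: "f \<in> V"
    have "f x = f y" if "x \<in> Zs" "y \<in> Zs" "\<forall>s\<le>N. x s = y s" for x y
    proof -
      have e: "tau N x = tau N y" using that(3) by (auto simp: tau_def fun_eq_iff)
      have "f (tau N x) = f x" "f (tau N y) = f y" using f that(1,2) unfolding V_def by blast+
      then show ?thesis using e by simp
    qed
    then show "f \<in> {f \<in> Hs. \<forall>x\<in>Zs. \<forall>y\<in>Zs. (\<forall>s\<le>N. x s = y s) \<longrightarrow> f x = f y}"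
      using f unfolding V_def by blast
  next
    fix f assume f: "f \<in> {f \<in> Hs. \<forall>x\<in>Zs. \<forall>y\<in>Zs. (\<forall>s\<le>N. x s = y s) \<longrightarrow> f x = f y}"
    have "f (tau N x) = f x" if "x \<in> Zs" for x
    proof -
      have "\<forall>s\<le>N. tau N x s = x s" by (simp add: tau_def)
      then show ?thesis using f tau_mem[OF adm that, of N] that by blast
    qed
    then show "f \<in> V" using f unfolding V_def by blast
  qed
  have eval: "\<bar>h y\<bar> \<le> sqrt (ip h h) * sqrt (ip (k y) (k y))" if "y \<in> Zs" "h \<in> Hs" for h y
    using CS_abs[OF that(2) kH[OF that(1)]] krep[OF that] by simp
  have conv: "(\<lambda>n. F n y) \<longlonglongrightarrow> g y"
    if F: "\<forall>n. F n \<in> Hs" and g: "g \<in> Hs" and y: "y \<in> Zs"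
      and lim: "(\<lambda>n. sqrt (ip (\<lambda>x. F n x - g x) (\<lambda>x. F n x - g x))) \<longlonglongrightarrow> 0" for F g y
  proof -
    have "(\<lambda>n. sqrt (ip (\<lambda>x. F n x - g x) (\<lambda>x. F n x - g x)) * sqrt (ip (k y) (k y))) \<longlonglongrightarrow> 0 * sqrt (ip (k y) (k y))"
      by (rule tendsto_mult[OF lim tendsto_const])
    then have t: "(\<lambda>n. sqrt (ip (\<lambda>x. F n x - g x) (\<lambda>x. F n x - g x)) * sqrt (ip (k y) (k y))) \<longlonglongrightarrow> 0"
      by simp
    have b: "\<forall>n. norm (F n y - g y) \<le> sqrt (ip (\<lambda>x. F n x - g x) (\<lambda>x. F n x - g x)) * sqrt (ip (k y) (k y))"
    proof
      fix n
      have "(\<lambda>x. F n x - g x) \<in> Hs" using diff_mem F g by blast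
      from eval[OF y this] show "norm (F n y - g y) \<le> sqrt (ip (\<lambda>x. F n x - g x) (\<lambda>x. F n x - g x)) * sqrt (ip (k y) (k y))"
        by simp
    qed
    have "(\<lambda>n. F n y - g y) \<longlonglongrightarrow> 0"
      by (rule Lim_null_comparison[OF always_eventually[OF b] t])
    then show ?thesis by (simp add: LIM_zero_iff)
  qed
  have Vproj: "\<exists>g\<in>V. \<forall>v\<in>V. ip (\<lambda>x. f x - g x) v = 0" if f: "f \<in> Hs" for f
  proof (rule projection[OF _ _ _ _ f])
    show "V \<subseteq> Hs" unfolding V_def by blast
    show "(\<lambda>x. 0) \<in> V" unfolding V_def using zero by simp
    show "(\<lambda>x. a * u x + b * v x) \<in> V" if "u \<in> V" "v \<in> V" for u v a b
      using that lc_mem unfolding V_def by auto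
    show "g \<in> V" if F: "\<forall>n. F n \<in> V" and g: "g \<in> Hs"
      and lim: "(\<lambda>n. sqrt (ip (\<lambda>x. F n x - g x) (\<lambda>x. F n x - g x))) \<longlonglongrightarrow> 0" for F g
    proof -
      have FH: "\<forall>n. F n \<in> Hs" using F unfolding V_def by blast
      have "g (tau N x) = g x" if x: "x \<in> Zs" for x
      proof -
        have l1: "(\<lambda>n. F n (tau N x)) \<longlonglongrightarrow> g (tau N x)" using conv[OF FH g tau_mem[OF adm x] lim] .
        have l2: "(\<lambda>n. F n x) \<longlonglongrightarrow> g x" using conv[OF FH g x lim] .
        have "(\<lambda>n. F n (tau N x)) = (\<lambda>n. F n x)" using F x unfolding V_def by auto
        then show ?thesis using l1 l2 LIMSEQ_unique by metis
      qed
      then show ?thesis using g unfolding V_def by blast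
    qed
  qed
  have ktau: "k (tau N x) \<in> V" if x: "x \<in> Zs" for x
  proof -
    have tx: "tau N x \<in> Zs" using tau_mem[OF adm x] .
    have "k (tau N x) (tau N y) = k (tau N x) y" if y: "y \<in> Zs" for y
      using tau_mem[OF adm y, of N] y lemC[OF fmp x y, of N] unfolding k_def by simp
    then show ?thesis using kH[OF tx] unfolding V_def by blast
  qed
  have key: "\<exists>g\<in>V. (\<forall>x\<in>Zs. g x = f (tau N x)) \<and> ip g g \<le> ip f f \<and> (f \<notin> V \<longrightarrow> ip g g < ip f f)"
    if f: "f \<in> Hs" for f
  proof -
    obtain g where gV: "g \<in> V" and go: "\<forall>v\<in>V. ip (\<lambda>x. f x - g x) v = 0" using Vproj[OF f] by blast
    have gH: "g \<in> Hs" using gV unfolding V_def by blast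
    define h where "h = (\<lambda>x. f x - g x)"
    have hH: "h \<in> Hs" unfolding h_def using diff_mem[OF f gH] .
    have ev: "g x = f (tau N x)" if x: "x \<in> Zs" for x
    proof -
      have "0 = ip h (k (tau N x))" using go ktau[OF x] h_def by simp
      also have "\<dots> = h (tau N x)" using krep[OF tau_mem[OF adm x] hH] .
      finally have "g (tau N x) = f (tau N x)" unfolding h_def by simp
      then show ?thesis using gV x unfolding V_def by auto
    qed
    have fe: "f = (\<lambda>x. 1 * g x + 1 * h x)" unfolding h_def by auto
    have "ip f f = ip g g + 2 * ip g h + ip h h"
      using Q_lc[OF gH hH, of 1 1] fe by simp
    moreover have "ip g h = 0" using go gV h_def sym[OF gH hH] by simp
    moreover have "ip h h \<ge> 0" using pos[OF hH] .
    moreover have "ip h h > 0" if "f \<notin> V"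
    proof -
      have "h \<noteq> (\<lambda>x. 0)"
      proof
        assume "h = (\<lambda>x. 0)"
        then have "f = g" unfolding h_def fun_eq_iff by simp
        then show False using that gV by simp
      qed
      then show ?thesis using def[OF hH] pos[OF hH] by fastforce
    qed
    ultimately show ?thesis using gV ev by (intro bexI[of _ g]) auto
  qed
  define F1 where "F1 f = \<E> (map (\<lambda>z. f (tau N z)) zs) + \<Lambda> (sqrt (ip f f))" for f
  define F2 where "F2 f = \<E> (map (\<lambda>z. f z) zs) + \<Lambda> (sqrt (ip f f))" for f
  have zsZ: "z \<in> Zs" if "z \<in> set zs" for z using zs_in that by blast
  have eqV: "F1 v = F2 v" if "v \<in> V" for v
  proof -
    have "map (\<lambda>z. v (tau N z)) zs = map (\<lambda>z. v z) zs"
    proof (rule map_cong[OF refl])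
      fix z assume "z \<in> set zs"
      then show "v (tau N z) = v z" using that zsZ unfolding V_def by blast
    qed
    then show ?thesis unfolding F1_def F2_def by (simp only:)
  qed
  have red: "\<exists>g\<in>V. F1 g \<le> F1 f \<and> (f \<notin> V \<longrightarrow> F1 g < F1 f)" if f: "f \<in> Hs" for f
  proof -
    obtain g where gV: "g \<in> V" and ev: "\<forall>x\<in>Zs. g x = f (tau N x)" and le: "ip g g \<le> ip f f"
      and lt: "f \<notin> V \<longrightarrow> ip g g < ip f f" using key[OF f] by blast
    have gH: "g \<in> Hs" using gV unfolding V_def by blast
    have "map (\<lambda>z. g (tau N z)) zs = map (\<lambda>z. f (tau N z)) zs"
    proof (rule map_cong[OF refl])
      fix z assume "z \<in> set zs"
      then have z: "z \<in> Zs" using zsZ by blast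
      then show "g (tau N z) = f (tau N z)" using gV ev unfolding V_def by auto
    qed
    then have me: "\<E> (map (\<lambda>z. g (tau N z)) zs) = \<E> (map (\<lambda>z. f (tau N z)) zs)" by (simp only:)
    have s0: "0 \<le> sqrt (ip g g)" using pos[OF gH] by simp
    have s1: "0 \<le> sqrt (ip f f)" using pos[OF f] by simp
    have mem: "sqrt (ip g g) \<in> {0..}" "sqrt (ip f f) \<in> {0..}" using s0 s1 by auto
    have sle: "sqrt (ip g g) \<le> sqrt (ip f f)" using le by simp
    have L1: "\<Lambda> (sqrt (ip g g)) \<le> \<Lambda> (sqrt (ip f f))"
    proof (cases "sqrt (ip g g) = sqrt (ip f f)")
      case True then show ?thesis by simp
    next
      case False
      then have "sqrt (ip g g) < sqrt (ip f f)" using sle by linarith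
      then show ?thesis using strict_mono_onD[OF \<Lambda>_mono mem] by linarith
    qed
    have L2: "\<Lambda> (sqrt (ip g g)) < \<Lambda> (sqrt (ip f f))" if "f \<notin> V"
    proof -
      have "ip g g < ip f f" using lt that by blast
      then have "sqrt (ip g g) < sqrt (ip f f)" by simp
      then show ?thesis using strict_mono_onD[OF \<Lambda>_mono mem] by blast
    qed
    have A: "F1 g \<le> F1 f" unfolding F1_def using me L1 by linarith
    have B: "F1 g < F1 f" if "f \<notin> V" unfolding F1_def using me L2[OF that] by linarith
    show ?thesis using gV A B by blast
  qed
  have VH: "V \<subseteq> Hs" unfolding V_def by blast
  have "argmin_on Hs F1 = argmin_on V F2"
  proof (intro set_eqI iffI)
    fix f assume "f \<in> argmin_on Hs F1"
    then have f: "f \<in> Hs" and fm: "\<forall>g\<in>Hs. F1 f \<le> F1 g" unfolding argmin_on_def by auto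
    have fV: "f \<in> V"
    proof (rule ccontr)
      assume "f \<notin> V"
      then obtain g where "g \<in> V" "F1 g < F1 f" using red[OF f] by blast
      then show False using fm VH by fastforce
    qed
    have "F2 f \<le> F2 v" if "v \<in> V" for v
      using eqV[OF fV] eqV[OF that] fm VH that by fastforce
    then show "f \<in> argmin_on V F2" using fV unfolding argmin_on_def by blast
  next
    fix f assume "f \<in> argmin_on V F2"
    then have fV: "f \<in> V" and fm: "\<forall>g\<in>V. F2 f \<le> F2 g" unfolding argmin_on_def by auto
    have "F1 f \<le> F1 g" if g: "g \<in> Hs" for g
    proof -
      obtain g' where g'V: "g' \<in> V" and "F1 g' \<le> F1 g" using red[OF g] by blast
      then show ?thesis using eqV[OF fV] eqV[OF g'V] fm by fastforce
    qed
    then show "f \<in> argmin_on Hs F1" using fV VH unfolding argmin_on_def by blast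
  qed
  then show ?thesis unfolding F1_def[abs_def] F2_def[abs_def] VHT .
qed

end
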